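(* Let $m\ge 2$ and let $T$ be any hierarchy of size $m$. Let $H^{(m)}(x)=\sum_{n\ge1}H^{(m)}_nx^n$, where $H^{(m)}_n$ is the number of isomorphism classes of hierarchies of size $n$ that do not contain a subhierarchy isomorphic to $T$, and let $\rho_m$ be the radius of convergence of $H^{(m)}(x)$. Then $$H^{(m)}(\rho_m)=\frac{1+\rho_m-\rho_m^m}{2},$$ where $H^{(m)}(\rho_m)=\sum_{n\ge1}H^{(m)}_n\rho_m^n$.
   Context: A hierarchy is a finite rooted unordered tree in which no vertex has exactly one child; its size is its number of leaves. For a vertex $v$ of a hierarchy, the subhierarchy at $v$ is the hierarchy induced by $v$ and all its descendants (with root $v$); a hierarchy contains $T$ as a subhierarchy if the subhierarchy at some vertex (possibly the root) is isomorphic to $T$ as a rooted tree. *)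

theory Defs
  imports "HOL-Analysis.Analysis" "HOL-Library.Multiset"
begin

text \<open>Rooted unordered finite trees, up to isomorphism: a node is the multiset
of its children's subtrees. Equality of htree values is exactly isomorphism
of rooted unordered trees.\<close>
datatype htree = HNode "htree multiset"

lemma htree_size_mem [termination_simp]:
  "z \<in># M \<Longrightarrow> f z < Suc (size_multiset f M)"
proof -
  assume "z \<in># M"
  then obtain N where "M = add_mset z N" by (blast dest: multi_member_split)
  then show ?thesis by simp
qed

text \<open>Number of leaves (the size of a hierarchy).\<close>
fun leaves :: "htree \<Rightarrow> nat" where
  "leaves (HNode M) = (if M = {#} then 1 else sum_mset (image_mset leaves M))"

fun is_hier :: "htree \<Rightarrow> bool" where
  "is_hier (HNode M) = (size M \<noteq> 1 \<and> (\<forall>t\<in>set_mset M. is_hier t))"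

fun subtrees :: "htree \<Rightarrow> htree set" where
  "subtrees (HNode M) = insert (HNode M) (\<Union>t\<in>set_mset M. subtrees t)"

definition contains_sub :: "htree \<Rightarrow> htree \<Rightarrow> bool" where
  "contains_sub t T \<longleftrightarrow> T \<in> subtrees t"

definition avoid_count :: "htree \<Rightarrow> nat \<Rightarrow> nat" where
  "avoid_count T n = card {t. is_hier t \<and> leaves t = n \<and> \<not> contains_sub t T}"

end

theory Submission
  imports Defs
begin

lemma leaves_pos: "leaves t \<ge> 1"
proof (induction t)
  case (HNode M)
  show ?case
  proof (cases "M = {#}")
    case False
    then obtain a M' where "M = add_mset a M'" by (metis multiset_cases)
    moreover have "leaves a \<ge> 1" using HNode \<open>M = add_mset a M'\<close> by auto
    ultimately show ?thesis by simp
  qed simp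
qed

lemma sum_mset_count:
  assumes "finite B" "set_mset M \<subseteq> B"
  shows "sum_mset (image_mset f M) = (\<Sum>s\<in>B. of_nat (count M s) * (f s :: 'b::comm_semiring_1))"
  using assms(2)
proof (induction M)
  case empty
  then show ?case by simp
next
  case (add a M)
  then have aB: "a \<in> B" by auto
  have "(\<Sum>s\<in>B. of_nat (count (add_mset a M) s) * f s) =
        (\<Sum>s\<in>B. of_nat (count M s) * f s + (if s = a then f s else 0))"
    by (intro sum.cong) (auto simp: algebra_simps)
  also have "\<dots> = (\<Sum>s\<in>B. of_nat (count M s) * f s) + f a"
    using aB assms(1) by (simp add: sum.distrib)
  finally show ?case using add by (simp add: add.commute)
qed

lemma leaves_node:
  assumes "M \<noteq> {#}" shows "leaves (HNode M) = sum_mset (image_mset leaves M)"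
  using assms by simp

lemma child_leaves_less:
  assumes "is_hier (HNode M)" "c \<in># M"
  shows "leaves c < leaves (HNode M)"
proof -
  obtain M' where M: "M = add_mset c M'" using assms(2) by (metis multi_member_split)
  from assms(1) M have "M' \<noteq> {#}" by auto
  then obtain d M'' where "M' = add_mset d M''" by (metis multiset_cases)
  with M have "leaves (HNode M) = leaves c + leaves d + sum_mset (image_mset leaves M'')" by simp
  with leaves_pos[of d] show ?thesis by simp
qed

lemma count_le_leaves:
  assumes "M \<noteq> {#}" shows "count M c \<le> leaves (HNode M)"
proof -
  have "count M c \<le> sum_mset (image_mset leaves M)"
  proof (induction M)
    case (add a M)
    then show ?case using leaves_pos[of a] by auto
  qed simp
  with assms show ?thesis by simp
qed

lemma subtrees_leaves: "s \<in> subtrees t \<Longrightarrow> leaves s \<le> leaves t"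
proof (induction t arbitrary: s)
  case (HNode M)
  show ?case
  proof (cases "s = HNode M")
    case False
    then obtain c where c: "c \<in># M" "s \<in> subtrees c" using HNode.prems by auto
    then have "leaves s \<le> leaves c" using HNode.IH by auto
    also have "leaves c \<le> sum_mset (image_mset leaves M)"
      using c(1) by (metis multi_member_split image_mset_add_mset sum_mset.add_mset le_add1)
    finally show ?thesis using c(1) by auto
  qed simp
qed

lemma self_subtree: "t \<in> subtrees t"
  by (cases t) auto

lemma finite_msets_bounded:
  assumes "finite B"
  shows "finite {M. set_mset M \<subseteq> B \<and> (\<forall>c. count M c \<le> K)}"
proof -
  let ?S = "{M. set_mset M \<subseteq> B \<and> (\<forall>c. count M c \<le> K)}"
  have "inj_on (\<lambda>M. restrict (count M) B) ?S"
  proof (rule inj_onI)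
    fix M M' assume M: "M \<in> ?S" and M': "M' \<in> ?S" and eq: "restrict (count M) B = restrict (count M') B"
    show "M = M'"
    proof (rule multiset_eqI)
      fix c show "count M c = count M' c"
      proof (cases "c \<in> B")
        case True then show ?thesis using fun_cong[OF eq, of c] by simp
      next
        case False
        then have "c \<notin># M" "c \<notin># M'" using M M' by auto
        then show ?thesis by (simp add: not_in_iff)
      qed
    qed
  qed
  moreover have "(\<lambda>M. restrict (count M) B) ` ?S \<subseteq> PiE B (\<lambda>_. {..K})" by auto
  moreover have "finite (PiE B (\<lambda>_. {..K}))" using assms by (intro finite_PiE) auto
  ultimately show ?thesis by (meson finite_imageD finite_subset)
qed

lemma finite_hier: "finite {t. is_hier t \<and> leaves t \<le> N}"
proof (induction N)
  case 0
  have "{t. is_hier t \<and> leaves t \<le> 0} = {}"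
  proof -
    { fix t have "\<not> leaves t \<le> 0" using leaves_pos[of t] by simp }
    then show ?thesis by blast
  qed
  then show ?case by (metis finite.emptyI)
next
  case (Suc N)
  let ?S = "{M. set_mset M \<subseteq> {t. is_hier t \<and> leaves t \<le> N} \<and> (\<forall>c. count M c \<le> Suc N)}"
  have "{t. is_hier t \<and> leaves t \<le> Suc N} \<subseteq> insert (HNode {#}) (HNode ` ?S)"
  proof
    fix t assume t: "t \<in> {t. is_hier t \<and> leaves t \<le> Suc N}"
    obtain M where tM: "t = HNode M" by (cases t)
    show "t \<in> insert (HNode {#}) (HNode ` ?S)"
    proof (cases "M = {#}")
      case False
      have "M \<in> ?S"
      proof (safe)
        fix c assume "c \<in># M"
        then show "is_hier c" "leaves c \<le> N"
          using t tM child_leaves_less[of M c] by auto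
      next
        fix c show "count M c \<le> Suc N" using count_le_leaves[OF False, of c] t tM by auto
      qed
      then show ?thesis using tM by auto
    qed (use tM in auto)
  qed
  moreover have "finite ?S" by (rule finite_msets_bounded[OF Suc])
  ultimately show ?case by (meson finite_imageI finite_insert finite_subset)
qed

definition Fs :: "htree set \<Rightarrow> nat \<Rightarrow> (htree \<Rightarrow> nat) set" where
  "Fs B J = PiE B (\<lambda>_. {..<J})"
definition mf :: "htree set \<Rightarrow> (htree \<Rightarrow> nat) \<Rightarrow> htree multiset" where
  "mf B f = (\<Sum>s\<in>B. replicate_mset (f s) s)"
definition wt :: "htree set \<Rightarrow> (htree \<Rightarrow> nat) \<Rightarrow> nat" where
  "wt B f = (\<Sum>s\<in>B. f s * leaves s)"

lemma count_mf: "finite B \<Longrightarrow> count (mf B f) s = (if s \<in> B then f s else 0)"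
  unfolding mf_def count_sum by (simp add: count_replicate_mset sum.delta)

lemma set_mf: "finite B \<Longrightarrow> set_mset (mf B f) \<subseteq> B"
proof
  fix s assume "finite B" "s \<in># mf B f"
  then have "count (mf B f) s > 0" by simp
  with \<open>finite B\<close> show "s \<in> B" by (simp add: count_mf split: if_splits)
qed

lemma size_mf: "size (mf B f) = (\<Sum>s\<in>B. f s)"
  unfolding mf_def by (induction B rule: infinite_finite_induct) auto

lemma leaves_mf:
  assumes "finite B" "mf B f \<noteq> {#}"
  shows "leaves (HNode (mf B f)) = wt B f"
proof -
  have "leaves (HNode (mf B f)) = sum_mset (image_mset leaves (mf B f))" using assms by simp
  also have "\<dots> = (\<Sum>s\<in>B. of_nat (count (mf B f) s) * leaves s)"
    by (rule sum_mset_count[OF assms(1) set_mf[OF assms(1)]])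
  also have "\<dots> = wt B f" unfolding wt_def using assms(1) by (intro sum.cong) (auto simp: count_mf)
  finally show ?thesis .
qed

lemma mf_inj:
  assumes "finite B" "f \<in> Fs B J" "g \<in> Fs B J" "mf B f = mf B g"
  shows "f = g"
proof
  fix s show "f s = g s"
  proof (cases "s \<in> B")
    case True then show ?thesis using arg_cong[OF assms(4), of "\<lambda>M. count M s"] assms(1) by (simp add: count_mf)
  next
    case False then show ?thesis using assms(2,3) by (auto simp: Fs_def PiE_def extensional_def)
  qed
qed

lemma mf_restrict:
  assumes "finite B" "set_mset C \<subseteq> B"
  shows "mf B (restrict (count C) B) = C"
proof (rule multiset_eqI)
  fix s show "count (mf B (restrict (count C) B)) s = count C s"
  proof (cases "s \<in> B")
    case False
    then have "s \<notin># C" using assms by auto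
    then show ?thesis using assms False by (simp add: count_mf not_in_iff)
  qed (use assms in \<open>simp add: count_mf\<close>)
qed

lemma Q_prod:
  assumes "finite B"
  shows "(\<Sum>f\<in>Fs B J. (x::real) ^ wt B f) = (\<Prod>s\<in>B. \<Sum>j<J. (x ^ leaves s) ^ j)"
proof -
  have "(\<Prod>s\<in>B. \<Sum>j<J. (x ^ leaves s) ^ j) = (\<Sum>g\<in>Fs B J. \<Prod>s\<in>B. (x ^ leaves s) ^ g s)"
    unfolding Fs_def by (rule prod_sum_PiE) (use assms in auto)
  also have "\<dots> = (\<Sum>g\<in>Fs B J. x ^ wt B g)"
    unfolding wt_def by (intro sum.cong refl) (simp add: power_sum[symmetric] power_mult[symmetric] mult.commute)
  finally show ?thesis by simp
qed

definition zf :: "htree set \<Rightarrow> htree \<Rightarrow> nat" where "zf B = (\<lambda>s\<in>B. 0)"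
definition indf :: "htree set \<Rightarrow> htree \<Rightarrow> htree \<Rightarrow> nat" where
  "indf B a = (\<lambda>s\<in>B. if s = a then 1 else 0)"
definition Rs :: "htree set \<Rightarrow> nat \<Rightarrow> (htree \<Rightarrow> nat) set" where
  "Rs B J = {f \<in> Fs B J. (\<Sum>s\<in>B. f s) \<ge> 2}"

lemma finite_Fs: "finite B \<Longrightarrow> finite (Fs B J)"
  unfolding Fs_def by (intro finite_PiE) auto

lemma Fs_decomp:
  assumes "finite B" "J \<ge> 2"
  shows "(\<Sum>f\<in>Fs B J. w f) = w (zf B) + (\<Sum>a\<in>B. w (indf B a)) + (\<Sum>f\<in>Rs B J. (w f :: real))"
proof -
  let ?S0 = "{f\<in>Fs B J. (\<Sum>s\<in>B. f s) = 0}"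
  let ?S1 = "{f\<in>Fs B J. (\<Sum>s\<in>B. f s) = 1}"
  have fin: "finite (Fs B J)" by (rule finite_Fs[OF assms(1)])
  have split: "Fs B J = ?S0 \<union> ?S1 \<union> Rs B J" unfolding Rs_def by auto
  have f0: "finite ?S0" "finite ?S1" "finite (Rs B J)" using fin unfolding Rs_def by auto
  have "(\<Sum>f\<in>?S0 \<union> ?S1 \<union> Rs B J. w f) = (\<Sum>f\<in>?S0 \<union> ?S1. w f) + (\<Sum>f\<in>Rs B J. w f)"
    by (rule sum.union_disjoint) (use f0 in \<open>auto simp: Rs_def\<close>)
  also have "(\<Sum>f\<in>?S0 \<union> ?S1. w f) = (\<Sum>f\<in>?S0. w f) + (\<Sum>f\<in>?S1. w f)"
    by (rule sum.union_disjoint) (use f0 in auto)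
  finally have "(\<Sum>f\<in>Fs B J. w f) = (\<Sum>f\<in>?S0. w f) + (\<Sum>f\<in>?S1. w f) + (\<Sum>f\<in>Rs B J. w f)"
    using split by simp
  moreover have "?S0 = {zf B}"
  proof
    show "?S0 \<subseteq> {zf B}"
    proof
      fix f assume f: "f \<in> ?S0"
      have "f = zf B"
      proof
        fix s show "f s = zf B s"
        proof (cases "s \<in> B")
          case True then show ?thesis using f assms(1) by (auto simp: zf_def)
        next
          case False then show ?thesis using f by (auto simp: zf_def Fs_def PiE_def extensional_def)
        qed
      qed
      then show "f \<in> {zf B}" by simp
    qed
  next
    show "{zf B} \<subseteq> ?S0" using assms by (auto simp: zf_def Fs_def)
  qed
  moreover have "?S1 = indf B ` B"
  proof
    show "?S1 \<subseteq> indf B ` B"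
    proof
      fix f assume f: "f \<in> ?S1"
      then have fs: "(\<Sum>s\<in>B. f s) = 1" by simp
      then obtain a where a: "a \<in> B" "f a \<noteq> 0" by (metis sum.neutral zero_neq_one)
      have "(\<Sum>s\<in>B. f s) = f a + (\<Sum>s\<in>B-{a}. f s)" using a assms(1) by (simp add: sum.remove)
      with fs a have fa: "f a = 1" and rest: "(\<Sum>s\<in>B-{a}. f s) = 0" by auto
      from rest have rest0: "\<forall>s\<in>B-{a}. f s = 0" using assms(1) by simp
      have "f = indf B a"
      proof
        fix s show "f s = indf B a s"
        proof (cases "s \<in> B")
          case True then show ?thesis using fa rest0 by (auto simp: indf_def)
        next
          case False then show ?thesis using f by (auto simp: indf_def Fs_def PiE_def extensional_def)
        qed
      qed
      then show "f \<in> indf B ` B" using a by auto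
    qed
  next
    show "indf B ` B \<subseteq> ?S1"
    proof
      fix f assume "f \<in> indf B ` B"
      then obtain a where a: "a \<in> B" "f = indf B a" by auto
      have "(\<Sum>s\<in>B. indf B a s) = (\<Sum>s\<in>B. if s = a then 1 else 0)"
        by (intro sum.cong) (auto simp: indf_def)
      also have "\<dots> = 1" using a assms(1) by (simp add: sum.delta)
      finally show "f \<in> ?S1" using a assms(2) by (auto simp: indf_def Fs_def)
    qed
  qed
  moreover have "inj_on (indf B) B"
  proof (rule inj_onI)
    fix a b assume "a \<in> B" "b \<in> B" "indf B a = indf B b"
    then have "indf B a a = indf B b a" by simp
    with \<open>a \<in> B\<close> show "a = b" by (auto simp: indf_def split: if_splits)
  qed
  ultimately show ?thesis by (simp add: sum.reindex)
qed

lemma wt_zf: "wt B (zf B) = 0" by (simp add: wt_def zf_def)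
lemma wt_indf: "finite B \<Longrightarrow> a \<in> B \<Longrightarrow> wt B (indf B a) = leaves a"
proof -
  assume "finite B" "a \<in> B"
  have "wt B (indf B a) = (\<Sum>s\<in>B. if s = a then leaves s else 0)"
    unfolding wt_def by (intro sum.cong) (auto simp: indf_def)
  also have "\<dots> = leaves a" using \<open>finite B\<close> \<open>a \<in> B\<close> by (simp add: sum.delta)
  finally show ?thesis .
qed

lemma Q_decomp:
  assumes "finite B" "J \<ge> 2"
  shows "(\<Prod>s\<in>B. \<Sum>j<J. ((x::real) ^ leaves s) ^ j) = 1 + (\<Sum>a\<in>B. x ^ leaves a) + (\<Sum>f\<in>Rs B J. x ^ wt B f)"
proof -
  have "(\<Prod>s\<in>B. \<Sum>j<J. (x ^ leaves s) ^ j) = (\<Sum>f\<in>Fs B J. x ^ wt B f)"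
    using Q_prod[OF assms(1)] by simp
  also have "\<dots> = x ^ wt B (zf B) + (\<Sum>a\<in>B. x ^ wt B (indf B a)) + (\<Sum>f\<in>Rs B J. x ^ wt B f)"
    by (rule Fs_decomp[OF assms])
  also have "(\<Sum>a\<in>B. x ^ wt B (indf B a)) = (\<Sum>a\<in>B. x ^ leaves a)"
    using assms(1) by (intro sum.cong) (auto simp: wt_indf)
  finally show ?thesis by (simp add: wt_zf)
qed

definition gg :: "real \<Rightarrow> real" where "gg z = - ln (1 - z) - z"

lemma exp_gg: "0 \<le> z \<Longrightarrow> z < 1 \<Longrightarrow> exp (z + gg z) = 1 / (1 - z)"
  by (simp add: gg_def exp_minus inverse_eq_divide)

lemma gg_nonneg: "0 \<le> z \<Longrightarrow> z < 1 \<Longrightarrow> 0 \<le> gg z"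
  using ln_add_one_self_le_self2[of "-z"] by (simp add: gg_def)

lemma gg_le: "0 \<le> z \<Longrightarrow> z < 1 \<Longrightarrow> gg z \<le> z^2 / (1 - z)"
proof -
  assume z: "0 \<le> z" "z < 1"
  have "ln (1 / (1 - z)) \<le> 1 / (1 - z) - 1" using z by (intro ln_le_minus_one) auto
  then have "- ln (1 - z) \<le> z / (1 - z)" using z by (simp add: ln_div field_simps)
  moreover have "z / (1 - z) - z = z^2 / (1 - z)" using z by (simp add: field_simps power2_eq_square)
  ultimately show ?thesis by (simp add: gg_def)
qed

definition star :: "nat \<Rightarrow> htree" where "star k = HNode (replicate_mset k (HNode {#}))"

locale avd =
  fixes T :: htree and m :: nat
  assumes m2: "m \<ge> 2" and hT: "is_hier T" and lT: "leaves T = m"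
begin

definition Av :: "nat \<Rightarrow> htree set" where
  "Av n = {t. is_hier t \<and> leaves t = n \<and> \<not> contains_sub t T}"
definition Bs :: "nat \<Rightarrow> htree set" where
  "Bs N = {t. is_hier t \<and> leaves t \<le> N \<and> \<not> contains_sub t T}"
definition Hc :: "nat \<Rightarrow> real" where
  "Hc n = (if n = 0 then 0 else real (avoid_count T n))"
definition hp :: "nat \<Rightarrow> real \<Rightarrow> real" where
  "hp N x = (\<Sum>n\<le>N. Hc n * x ^ n)"
definition Gp :: "nat \<Rightarrow> real \<Rightarrow> real" where
  "Gp N x = (\<Sum>n\<le>N. Hc n * gg (x ^ n))"
definition CT :: "htree multiset" where "CT = (case T of HNode C \<Rightarrow> C)"
definition fT :: "htree set \<Rightarrow> htree \<Rightarrow> nat" where "fT B = restrict (count CT) B"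

lemma T_CT: "T = HNode CT" unfolding CT_def by (cases T) auto

lemma finite_Bs: "finite (Bs N)"
proof -
  have "Bs N \<subseteq> {t. is_hier t \<and> leaves t \<le> N}" by (auto simp: Bs_def)
  then show ?thesis using finite_hier[of N] by (rule finite_subset)
qed

lemma finite_Av: "finite (Av N)"
proof -
  have "Av N \<subseteq> {t. is_hier t \<and> leaves t \<le> N}" by (auto simp: Av_def)
  then show ?thesis using finite_hier[of N] by (rule finite_subset)
qed

lemma Av0: "Av 0 = {}"
proof -
  { fix t have "leaves t \<noteq> 0" using leaves_pos[of t] by linarith }
  then show ?thesis by (auto simp: Av_def)
qed

lemma Hc_card: "Hc n = real (card (Av n))"
  by (cases "n = 0") (auto simp: Hc_def avoid_count_def Av_def[symmetric] Av0)

lemma Hc_nonneg: "Hc n \<ge> 0" by (simp add: Hc_card)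

lemma sum_Bs: "(\<Sum>t\<in>Bs N. \<phi> (leaves t)) = (\<Sum>n\<le>N. Hc n * (\<phi> n :: real))"
proof -
  have "(\<Sum>t\<in>Bs N. \<phi> (leaves t)) = (\<Sum>n\<in>{..N}. \<Sum>t\<in>{t\<in>Bs N. leaves t = n}. \<phi> (leaves t))"
    by (rule sum.group[symmetric]) (use finite_Bs in \<open>auto simp: Bs_def\<close>)
  also have "\<dots> = (\<Sum>n\<le>N. Hc n * \<phi> n)"
  proof (intro sum.cong refl)
    fix n assume "n \<in> {..N}"
    then have "{t\<in>Bs N. leaves t = n} = Av n" by (auto simp: Bs_def Av_def)
    then show "(\<Sum>t\<in>{t\<in>Bs N. leaves t = n}. \<phi> (leaves t)) = Hc n * \<phi> n"
      by (simp add: Hc_card Av_def)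
  qed
  finally show ?thesis .
qed

lemma hp_Bs: "hp N x = (\<Sum>t\<in>Bs N. x ^ leaves t)"
  unfolding hp_def by (rule sum_Bs[symmetric])

lemma Gp_Bs: "Gp N x = (\<Sum>t\<in>Bs N. gg (x ^ leaves t))"
  unfolding Gp_def by (rule sum_Bs[symmetric])

lemma CT_ne: "CT \<noteq> {#}"
proof
  assume "CT = {#}"
  then have "leaves T = 1" using T_CT by simp
  with lT m2 show False by simp
qed

lemma CT_size: "size CT \<ge> 2"
proof -
  have "size CT \<noteq> 1" using hT T_CT by (metis is_hier.simps)
  moreover have "size CT \<noteq> 0" using CT_ne by simp
  ultimately show ?thesis by linarith
qed

lemma CT_child:
  assumes "c \<in># CT"
  shows "is_hier c" "leaves c < m" "\<not> contains_sub c T"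
proof -
  show "is_hier c" using hT assms T_CT by (metis is_hier.simps)
  show lc: "leaves c < m" using child_leaves_less[of CT c] hT T_CT assms lT by simp
  show "\<not> contains_sub c T"
  proof
    assume "contains_sub c T"
    then have "leaves T \<le> leaves c" by (simp add: contains_sub_def subtrees_leaves)
    with lc lT show False by simp
  qed
qed

lemma CT_Bs: "N \<ge> m - 1 \<Longrightarrow> set_mset CT \<subseteq> Bs N"
  using CT_child by (fastforce simp: Bs_def)

lemma avoid_node:
  assumes "finite B" "B \<subseteq> Bs K" "f \<in> Rs B J" "f \<noteq> fT B"
  shows "is_hier (HNode (mf B f))" "\<not> contains_sub (HNode (mf B f)) T"
proof -
  have sz: "size (mf B f) \<ge> 2" using assms(3) by (simp add: Rs_def size_mf)
  have ch: "\<And>c. c \<in># mf B f \<Longrightarrow> c \<in> Bs K" using set_mf[OF assms(1)] assms(2) by auto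
  show "is_hier (HNode (mf B f))" using sz ch by (auto simp: Bs_def)
  have "T \<noteq> HNode (mf B f)"
  proof
    assume "T = HNode (mf B f)"
    then have "CT = mf B f" using T_CT by simp
    then have "fT B = restrict (count (mf B f)) B" by (simp add: fT_def)
    also have "\<dots> = f"
    proof
      fix s show "restrict (count (mf B f)) B s = f s"
        using assms(3) assms(1) by (auto simp: Rs_def Fs_def count_mf PiE_def extensional_def)
    qed
    finally show False using assms(4) by simp
  qed
  then show "\<not> contains_sub (HNode (mf B f)) T"
    using ch by (auto simp: contains_sub_def Bs_def)
qed

lemma fT_Rs:
  assumes "N \<ge> m" "m < J"
  shows "fT (Bs (N - 1)) \<in> Rs (Bs (N - 1)) J"
    "mf (Bs (N - 1)) (fT (Bs (N - 1))) = CT"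
    "wt (Bs (N - 1)) (fT (Bs (N - 1))) = m"
proof -
  have sub: "set_mset CT \<subseteq> Bs (N - 1)" using CT_Bs assms by simp
  show mfeq: "mf (Bs (N - 1)) (fT (Bs (N - 1))) = CT"
    unfolding fT_def by (rule mf_restrict[OF finite_Bs sub])
  have cnt: "\<And>c. count CT c \<le> m" using count_le_leaves[OF CT_ne] T_CT lT by simp
  have "fT (Bs (N - 1)) \<in> Fs (Bs (N - 1)) J"
    using cnt assms(2) by (auto simp: fT_def Fs_def intro: le_less_trans)
  moreover have "(\<Sum>s\<in>Bs (N-1). fT (Bs (N - 1)) s) = size CT"
    using size_mf[of "Bs (N-1)" "fT (Bs (N - 1))"] mfeq by simp
  ultimately show "fT (Bs (N - 1)) \<in> Rs (Bs (N - 1)) J" using CT_size by (simp add: Rs_def)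
  show "wt (Bs (N - 1)) (fT (Bs (N - 1))) = m"
  proof -
    have "leaves (HNode CT) = wt (Bs (N - 1)) (fT (Bs (N - 1)))"
      using leaves_mf[OF finite_Bs, of "N-1" "fT (Bs (N - 1))"] mfeq CT_ne by metis
    then show ?thesis using T_CT lT by simp
  qed
qed


lemma pow_lt1: "0 \<le> (x::real) \<Longrightarrow> x < 1 \<Longrightarrow> t \<in> Bs N \<Longrightarrow> x ^ leaves t < 1"
  using leaves_pos[of t] by (simp add: power_less_one_iff)

lemma prod_exp:
  assumes "0 \<le> x" "x < 1"
  shows "(\<Prod>s\<in>Bs N. 1 / (1 - x ^ leaves s)) = exp (hp N x + Gp N x)"
proof -
  have "exp (hp N x + Gp N x) = exp (\<Sum>t\<in>Bs N. x ^ leaves t + gg (x ^ leaves t))"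
    by (simp add: hp_Bs Gp_Bs sum.distrib)
  also have "\<dots> = (\<Prod>t\<in>Bs N. exp (x ^ leaves t + gg (x ^ leaves t)))"
    by (rule exp_sum[OF finite_Bs])
  also have "\<dots> = (\<Prod>s\<in>Bs N. 1 / (1 - x ^ leaves s))"
    using assms by (intro prod.cong refl exp_gg) (auto intro: pow_lt1)
  finally show ?thesis by simp
qed

lemma geom_le: "0 \<le> (z::real) \<Longrightarrow> z < 1 \<Longrightarrow> (\<Sum>j<J. z ^ j) \<le> 1 / (1 - z)"
  by (simp add: sum_gp_strict divide_right_mono)

lemma finite_avoid_le:
  assumes "finite F" "\<And>t. t \<in> F \<Longrightarrow> is_hier t \<and> \<not> contains_sub t T"
    "summable (\<lambda>n. Hc n * x ^ n)" "0 \<le> x"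
  shows "(\<Sum>t\<in>F. x ^ leaves t) \<le> suminf (\<lambda>n. Hc n * x ^ n)"
proof -
  define K where "K = (\<Sum>t\<in>F. leaves t)"
  have "F \<subseteq> Bs K" using assms(1,2) by (auto simp: Bs_def K_def intro: member_le_sum)
  then have "(\<Sum>t\<in>F. x ^ leaves t) \<le> (\<Sum>t\<in>Bs K. x ^ leaves t)"
    using assms(4) by (intro sum_mono2 finite_Bs) auto
  also have "\<dots> = hp K x" by (simp add: hp_Bs)
  also have "\<dots> \<le> suminf (\<lambda>n. Hc n * x ^ n)"
    unfolding hp_def using assms(3,4) by (intro sum_le_suminf) (auto intro!: mult_nonneg_nonneg Hc_nonneg)
  finally show ?thesis .
qed

lemma core_upper:
  assumes "N \<ge> 1" "0 \<le> x" "x < 1"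
  shows "hp N x + (if N \<ge> m then x ^ m else 0) \<le> x + exp (hp (N-1) x + Gp (N-1) x) - 1 - hp (N-1) x"
proof -
  let ?B = "Bs (N-1)"
  let ?J = "N+1"
  define R' where "R' = Rs ?B ?J - (if N \<ge> m then {fT ?B} else {})"
  have finB: "finite ?B" by (rule finite_Bs)
  have sub: "Bs N \<subseteq> insert (HNode {#}) ((\<lambda>f. HNode (mf ?B f)) ` R')"
  proof
    fix t assume t: "t \<in> Bs N"
    obtain C where tC: "t = HNode C" by (cases t)
    show "t \<in> insert (HNode {#}) ((\<lambda>f. HNode (mf ?B f)) ` R')"
    proof (cases "C = {#}")
      case True then show ?thesis using tC by simp
    next
      case False
      have hier: "is_hier t" "leaves t \<le> N" "\<not> contains_sub t T" using t by (auto simp: Bs_def)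
      have setC: "set_mset C \<subseteq> ?B"
      proof
        fix c assume c: "c \<in># C"
        have "is_hier c" using hier(1) tC c by auto
        moreover have "leaves c < leaves t" using child_leaves_less[of C c] hier(1) tC c by simp
        moreover have "\<not> contains_sub c T" using hier(3) tC c by (auto simp: contains_sub_def)
        ultimately show "c \<in> ?B" using hier(2) by (auto simp: Bs_def)
      qed
      define f where "f = restrict (count C) ?B"
      have mfC: "mf ?B f = C" unfolding f_def by (rule mf_restrict[OF finB setC])
      have "\<And>s. count C s \<le> N" using count_le_leaves[OF False] hier(2) tC by (metis le_trans)
      then have fF: "f \<in> Fs ?B ?J" by (auto simp: f_def Fs_def less_Suc_eq_le)
      have "(\<Sum>s\<in>?B. f s) = size C" using size_mf[of ?B f] mfC by simp
      moreover have "size C \<ge> 2"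
      proof -
        have "size C \<noteq> 1" using hier(1) tC by simp
        moreover have "size C \<noteq> 0" using False by simp
        ultimately show ?thesis by linarith
      qed
      ultimately have fR: "f \<in> Rs ?B ?J" using fF by (simp add: Rs_def)
      have "f \<in> R'"
      proof (cases "N \<ge> m")
        case True
        have "f \<noteq> fT ?B"
        proof
          assume "f = fT ?B"
          then have "C = CT" using mfC fT_Rs(2)[OF True, of ?J] True by simp
          then have "t = T" using tC T_CT by simp
          then show False using hier(3) self_subtree[of t] by (simp add: contains_sub_def)
        qed
        then show ?thesis using fR True by (simp add: R'_def)
      qed (use fR in \<open>simp add: R'_def\<close>)
      then show ?thesis using tC mfC by auto
    qed
  qed
  have finR: "finite R'"
    using finite_Fs[OF finB, of ?J] by (rule finite_subset[rotated]) (auto simp: R'_def Rs_def)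
  have "hp N x = (\<Sum>t\<in>Bs N. x ^ leaves t)" by (rule hp_Bs)
  also have "\<dots> \<le> (\<Sum>t\<in>insert (HNode {#}) ((\<lambda>f. HNode (mf ?B f)) ` R'). x ^ leaves t)"
    using sub finR assms(2) by (intro sum_mono2) auto
  also have "\<dots> \<le> x + (\<Sum>t\<in>(\<lambda>f. HNode (mf ?B f)) ` R'. x ^ leaves t)"
    using finR assms(2) by (simp add: sum.insert_if)
  also have "(\<Sum>t\<in>(\<lambda>f. HNode (mf ?B f)) ` R'. x ^ leaves t) \<le> (\<Sum>f\<in>R'. x ^ leaves (HNode (mf ?B f)))"
    using sum_image_le[OF finR, of "\<lambda>t. x ^ leaves t" "\<lambda>f. HNode (mf ?B f)"] assms by (simp add: o_def)
  also have "(\<Sum>f\<in>R'. x ^ leaves (HNode (mf ?B f))) = (\<Sum>f\<in>R'. x ^ wt ?B f)"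
  proof (intro sum.cong refl)
    fix f assume "f \<in> R'"
    then have "size (mf ?B f) \<ge> 2" by (simp add: R'_def Rs_def size_mf split: if_splits)
    then have "mf ?B f \<noteq> {#}" by auto
    then show "x ^ leaves (HNode (mf ?B f)) = x ^ wt ?B f" by (metis leaves_mf[OF finB])
  qed
  finally have 1: "hp N x \<le> x + (\<Sum>f\<in>R'. x ^ wt ?B f)" by simp
  have finRs: "finite (Rs ?B ?J)"
    using finite_Fs[OF finB, of ?J] by (rule finite_subset[rotated]) (auto simp: Rs_def)
  have 2: "(\<Sum>f\<in>Rs ?B ?J. x ^ wt ?B f) = (\<Sum>f\<in>R'. x ^ wt ?B f) + (if N \<ge> m then x ^ m else 0)"
  proof (cases "N \<ge> m")
    case True
    have "(\<Sum>f\<in>Rs ?B ?J. x ^ wt ?B f) = x ^ wt ?B (fT ?B) + (\<Sum>f\<in>Rs ?B ?J - {fT ?B}. x ^ wt ?B f)"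
      using fT_Rs(1)[OF True, of ?J] True finRs by (intro sum.remove) auto
    then show ?thesis using True fT_Rs(3)[OF True, of ?J] by (simp add: R'_def)
  qed (simp add: R'_def)
  have 3: "(\<Prod>s\<in>?B. \<Sum>j<?J. (x ^ leaves s) ^ j) = 1 + hp (N-1) x + (\<Sum>f\<in>Rs ?B ?J. x ^ wt ?B f)"
    using Q_decomp[OF finB, of ?J x] assms(1) hp_Bs by simp
  have 4: "(\<Prod>s\<in>?B. \<Sum>j<?J. (x ^ leaves s) ^ j) \<le> (\<Prod>s\<in>?B. 1 / (1 - x ^ leaves s))"
    using assms by (intro prod_mono conjI geom_le sum_nonneg) (auto intro: pow_lt1)
  have 5: "(\<Prod>s\<in>?B. 1 / (1 - x ^ leaves s)) = exp (hp (N-1) x + Gp (N-1) x)"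
    by (rule prod_exp[OF assms(2,3)])
  from 1 2 3 4 5 show ?thesis by linarith
qed

lemma core_lower:
  assumes "N \<ge> m" "0 \<le> x" "x < 1" "summable (\<lambda>n. Hc n * x ^ n)" "J > m"
  shows "x + (\<Prod>s\<in>Bs (N-1). \<Sum>j<J. (x ^ leaves s) ^ j) - 1 - hp (N-1) x - x ^ m
           \<le> suminf (\<lambda>n. Hc n * x ^ n)"
proof -
  let ?B = "Bs (N-1)"
  define R' where "R' = Rs ?B J - {fT ?B}"
  have finB: "finite ?B" by (rule finite_Bs)
  have finRs: "finite (Rs ?B J)"
    using finite_Fs[OF finB, of J] by (rule finite_subset[rotated]) (auto simp: Rs_def)
  have finR: "finite R'" using finRs by (simp add: R'_def)
  have J2: "J \<ge> 2" using assms(5) m2 by simp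
  have ne: "\<And>f. f \<in> R' \<Longrightarrow> mf ?B f \<noteq> {#}"
  proof -
    fix f assume "f \<in> R'"
    then have "size (mf ?B f) \<ge> 2" by (simp add: R'_def Rs_def size_mf)
    then show "mf ?B f \<noteq> {#}" by auto
  qed
  have inj: "inj_on (\<lambda>f. HNode (mf ?B f)) R'"
  proof (rule inj_onI)
    fix f g assume "f \<in> R'" "g \<in> R'" "HNode (mf ?B f) = HNode (mf ?B g)"
    then show "f = g" using mf_inj[OF finB, of f J g] by (auto simp: R'_def Rs_def)
  qed
  let ?S = "insert (HNode {#}) ((\<lambda>f. HNode (mf ?B f)) ` R')"
  have "(\<Sum>t\<in>?S. x ^ leaves t) \<le> suminf (\<lambda>n. Hc n * x ^ n)"
  proof (rule finite_avoid_le)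
    show "finite ?S" using finR by simp
    fix t assume "t \<in> ?S"
    then show "is_hier t \<and> \<not> contains_sub t T"
    proof
      assume "t = HNode {#}"
      then show ?thesis using lT m2 by (auto simp: contains_sub_def)
    next
      assume "t \<in> (\<lambda>f. HNode (mf ?B f)) ` R'"
      then obtain f where f: "f \<in> R'" "t = HNode (mf ?B f)" by auto
      then show ?thesis using avoid_node[OF finB order_refl, of f J] by (auto simp: R'_def)
    qed
  qed (use assms in auto)
  moreover have "(\<Sum>t\<in>?S. x ^ leaves t) = x + (\<Sum>f\<in>R'. x ^ wt ?B f)"
  proof -
    have "HNode {#} \<notin> (\<lambda>f. HNode (mf ?B f)) ` R'" using ne by auto
    then have "(\<Sum>t\<in>?S. x ^ leaves t) = x + (\<Sum>t\<in>(\<lambda>f. HNode (mf ?B f)) ` R'. x ^ leaves t)"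
      using finR by simp
    also have "(\<Sum>t\<in>(\<lambda>f. HNode (mf ?B f)) ` R'. x ^ leaves t) = (\<Sum>f\<in>R'. x ^ leaves (HNode (mf ?B f)))"
      using inj by (simp add: sum.reindex)
    also have "\<dots> = (\<Sum>f\<in>R'. x ^ wt ?B f)"
      using ne by (intro sum.cong refl) (metis leaves_mf[OF finB])
    finally show ?thesis .
  qed
  moreover have "(\<Sum>f\<in>Rs ?B J. x ^ wt ?B f) = x ^ m + (\<Sum>f\<in>R'. x ^ wt ?B f)"
  proof -
    have "(\<Sum>f\<in>Rs ?B J. x ^ wt ?B f) = x ^ wt ?B (fT ?B) + (\<Sum>f\<in>Rs ?B J - {fT ?B}. x ^ wt ?B f)"
      using fT_Rs(1)[OF assms(1,5)] finRs by (intro sum.remove) auto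
    then show ?thesis using fT_Rs(3)[OF assms(1,5)] by (simp add: R'_def)
  qed
  moreover have "(\<Prod>s\<in>?B. \<Sum>j<J. (x ^ leaves s) ^ j) = 1 + hp (N-1) x + (\<Sum>f\<in>Rs ?B J. x ^ wt ?B f)"
    using Q_decomp[OF finB J2, of x] hp_Bs by simp
  ultimately show ?thesis by linarith
qed


end


context avd
begin

definition Hs :: "real \<Rightarrow> real" where "Hs x = suminf (\<lambda>n. Hc n * x ^ n)"
definition Gs :: "real \<Rightarrow> real" where "Gs x = suminf (\<lambda>n. Hc n * gg (x ^ n))"

lemma Hc0: "Hc 0 = 0" by (simp add: Hc_def)

lemma gterm_nonneg: "0 \<le> x \<Longrightarrow> x < 1 \<Longrightarrow> 0 \<le> Hc n * gg (x ^ n)"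
proof (cases "n = 0")
  case True then show ?thesis by (simp add: Hc0)
next
  case False
  assume x: "0 \<le> x" "x < 1"
  have "x ^ n < 1" using x False by (simp add: power_less_one_iff)
  then have "0 \<le> gg (x ^ n)" using x by (intro gg_nonneg) auto
  then show ?thesis using Hc_nonneg[of n] by simp
qed

lemma hterm_nonneg: "0 \<le> x \<Longrightarrow> 0 \<le> Hc n * x ^ n"
  by (auto intro!: mult_nonneg_nonneg Hc_nonneg)

lemma gg_pow_le:
  assumes "0 \<le> x" "x < 1" "n \<ge> 1"
  shows "gg (x ^ n) \<le> (x^2) ^ n / (1 - x)"
proof -
  have xn: "0 \<le> x ^ n" "x ^ n < 1" "x ^ n \<le> x" using assms
    by (auto simp: power_less_one_iff intro: power_decreasing[of 1 n x, simplified])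
  have "gg (x ^ n) \<le> (x ^ n)^2 / (1 - x ^ n)" using xn by (intro gg_le) auto
  also have "\<dots> \<le> (x ^ n)^2 / (1 - x)" using xn assms
    by (intro divide_left_mono mult_pos_pos) auto
  finally show ?thesis by (simp add: power_mult[symmetric] mult.commute)
qed

lemma G_summable:
  assumes "0 \<le> x" "x < 1" "summable (\<lambda>n. Hc n * (x^2) ^ n)"
  shows "summable (\<lambda>n. Hc n * gg (x ^ n))"
proof (rule summable_comparison_test)
  show "\<exists>N. \<forall>n\<ge>N. norm (Hc n * gg (x ^ n)) \<le> Hc n * (x^2) ^ n / (1 - x)"
  proof (intro exI allI impI)
    fix n :: nat assume "n \<ge> 1"
    then show "norm (Hc n * gg (x ^ n)) \<le> Hc n * (x^2) ^ n / (1 - x)"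
    proof -
      have "Hc n * gg (x ^ n) \<le> Hc n * ((x^2) ^ n / (1 - x))"
        using gg_pow_le[OF assms(1,2) \<open>n \<ge> 1\<close>] Hc_nonneg[of n] by (rule mult_left_mono)
      then show ?thesis using gterm_nonneg[OF assms(1,2), of n] by simp
    qed
  qed
  show "summable (\<lambda>n. Hc n * (x^2) ^ n / (1 - x))" using assms(3) by (rule summable_divide)
qed

lemma hp_le_Hs: "summable (\<lambda>n. Hc n * x ^ n) \<Longrightarrow> 0 \<le> x \<Longrightarrow> hp N x \<le> Hs x"
  unfolding hp_def Hs_def by (intro sum_le_suminf) (auto intro: hterm_nonneg)

lemma Gp_le_Gs: "summable (\<lambda>n. Hc n * gg (x ^ n)) \<Longrightarrow> 0 \<le> x \<Longrightarrow> x < 1 \<Longrightarrow> Gp N x \<le> Gs x"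
  unfolding Gp_def Gs_def by (intro sum_le_suminf) (auto intro: gterm_nonneg)

lemma Gs_nonneg: "summable (\<lambda>n. Hc n * gg (x ^ n)) \<Longrightarrow> 0 \<le> x \<Longrightarrow> x < 1 \<Longrightarrow> 0 \<le> Gs x"
  unfolding Gs_def by (intro suminf_nonneg) (auto intro: gterm_nonneg)

lemma hp_nonneg: "0 \<le> x \<Longrightarrow> 0 \<le> hp N x"
  unfolding hp_def by (intro sum_nonneg hterm_nonneg)

lemma hp_mono: "N \<le> N' \<Longrightarrow> 0 \<le> x \<Longrightarrow> hp N x \<le> hp N' x"
  unfolding hp_def by (intro sum_mono2) (auto intro: hterm_nonneg)

lemma hp_lim: "summable (\<lambda>n. Hc n * x ^ n) \<Longrightarrow> (\<lambda>N. hp N x) \<longlonglongrightarrow> Hs x"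
  unfolding hp_def Hs_def by (rule summable_LIMSEQ')

lemma Gp_lim: "summable (\<lambda>n. Hc n * gg (x ^ n)) \<Longrightarrow> (\<lambda>N. Gp N x) \<longlonglongrightarrow> Gs x"
  unfolding Gp_def Gs_def by (rule summable_LIMSEQ')

lemma bounded_summable:
  assumes "\<And>N. hp N x \<le> y" "0 \<le> x"
  shows "summable (\<lambda>n. Hc n * x ^ n)" "Hs x \<le> y"
proof -
  have le: "(\<Sum>i<n. Hc i * x ^ i) \<le> y" for n
  proof -
    have "(\<Sum>i<n. Hc i * x ^ i) \<le> (\<Sum>i\<le>n. Hc i * x ^ i)"
      using assms(2) by (intro sum_mono2) (auto intro: hterm_nonneg)
    also have "\<dots> \<le> y" using assms(1)[of n] by (simp add: hp_def)
    finally show ?thesis .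
  qed
  show sm: "summable (\<lambda>n. Hc n * x ^ n)"
    by (rule summableI_nonneg_bounded[OF hterm_nonneg[OF assms(2)] le])
  show "Hs x \<le> y" unfolding Hs_def by (rule suminf_le_const[OF sm le])
qed

lemma EQ:
  assumes "0 \<le> x" "x < 1" "summable (\<lambda>n. Hc n * x ^ n)" "summable (\<lambda>n. Hc n * gg (x ^ n))"
  shows "2 * Hs x = x - x ^ m + exp (Hs x + Gs x) - 1"
proof -
  have lh: "(\<lambda>N. hp (Suc N) x) \<longlonglongrightarrow> Hs x" using hp_lim[OF assms(3)] by (rule LIMSEQ_Suc)
  have lr: "(\<lambda>N. x + exp (hp N x + Gp N x) - 1 - hp N x) \<longlonglongrightarrow> x + exp (Hs x + Gs x) - 1 - Hs x"
    using hp_lim[OF assms(3)] Gp_lim[OF assms(4)] by (intro tendsto_intros)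
  have up: "Hs x + x ^ m \<le> x + exp (Hs x + Gs x) - 1 - Hs x"
  proof (rule LIMSEQ_le[OF _ lr])
    show "(\<lambda>N. hp (Suc N) x + x ^ m) \<longlonglongrightarrow> Hs x + x ^ m" using lh by (intro tendsto_intros)
    show "\<exists>K. \<forall>N\<ge>K. hp (Suc N) x + x ^ m \<le> x + exp (hp N x + Gp N x) - 1 - hp N x"
    proof (intro exI allI impI)
      fix N assume "N \<ge> m"
      then show "hp (Suc N) x + x ^ m \<le> x + exp (hp N x + Gp N x) - 1 - hp N x"
        using core_upper[of "Suc N" x] assms(1,2) by simp
    qed
  qed
  have low1: "x + exp (hp N x + Gp N x) - 1 - hp N x - x ^ m \<le> Hs x" if N: "N \<ge> m" for N
  proof -
    have lim: "(\<lambda>J. x + (\<Prod>s\<in>Bs N. \<Sum>j<J. (x ^ leaves s) ^ j) - 1 - hp N x - x ^ m)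
        \<longlonglongrightarrow> x + (\<Prod>s\<in>Bs N. 1 / (1 - x ^ leaves s)) - 1 - hp N x - x ^ m"
    proof (intro tendsto_intros)
      fix s assume "s \<in> Bs N"
      then have "norm (x ^ leaves s) < 1" using pow_lt1[OF assms(1,2)] assms(1) by simp
      then show "(\<lambda>J. \<Sum>j<J. (x ^ leaves s) ^ j) \<longlonglongrightarrow> 1 / (1 - x ^ leaves s)"
        using geometric_sums sums_def by blast
    qed
    have "x + (\<Prod>s\<in>Bs N. 1 / (1 - x ^ leaves s)) - 1 - hp N x - x ^ m \<le> Hs x"
    proof (rule LIMSEQ_le_const2[OF lim], intro exI allI impI)
      fix J assume "J \<ge> Suc m"
      then show "x + (\<Prod>s\<in>Bs N. \<Sum>j<J. (x ^ leaves s) ^ j) - 1 - hp N x - x ^ m \<le> Hs x"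
        using core_lower[of "Suc N" x J] N assms unfolding Hs_def by simp
    qed
    then show ?thesis using prod_exp[OF assms(1,2)] by simp
  qed
  have low: "x + exp (Hs x + Gs x) - 1 - Hs x - x ^ m \<le> Hs x"
  proof (rule LIMSEQ_le_const2)
    show "(\<lambda>N. x + exp (hp N x + Gp N x) - 1 - hp N x - x ^ m) \<longlonglongrightarrow> x + exp (Hs x + Gs x) - 1 - Hs x - x ^ m"
      using hp_lim[OF assms(3)] Gp_lim[OF assms(4)] by (intro tendsto_intros)
    show "\<exists>K. \<forall>N\<ge>K. x + exp (hp N x + Gp N x) - 1 - hp N x - x ^ m \<le> Hs x"
      using low1 by blast
  qed
  from up low show ?thesis by linarith
qed

lemma exp_mono_gap:
  assumes "0 \<le> a" "a \<le> y" "0 \<le> c" "c \<le> (d::real)"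
  shows "exp (a + c) - a \<le> exp (y + d) - y"
proof -
  have e1: "exp (a + c) \<le> exp (a + d)" using assms by simp
  have e2: "exp (y + d) = exp (a + d) * exp (y - a)" by (simp add: exp_add[symmetric])
  have e3: "exp (a + d) * (1 + (y - a)) \<le> exp (a + d) * exp (y - a)"
    by (intro mult_left_mono exp_ge_add_one_self) simp
  have e4: "exp (a + d) \<ge> 1" using assms by simp
  have e5: "(exp (a + d) - 1) * (y - a) \<ge> 0" using e4 assms by simp
  have "exp (a + d) * (1 + (y - a)) = exp (a + d) + (exp (a + d) - 1) * (y - a) + (y - a)"
    by (simp add: algebra_simps)
  with e1 e2 e3 e5 show ?thesis by linarith
qed

lemma least_super:
  assumes "0 \<le> x" "x < 1" "summable (\<lambda>n. Hc n * gg (x ^ n))"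
    "hp (m - 1) x \<le> y" "x - x ^ m + exp (y + Gs x) - 1 \<le> 2 * y"
  shows "hp N x \<le> y"
proof (induction N)
  case 0
  then show ?case using hp_mono[of 0 "m - 1" x] assms by simp
next
  case (Suc N)
  show ?case
  proof (cases "Suc N \<ge> m")
    case False
    then have "Suc N \<le> m - 1" by simp
    then show ?thesis using hp_mono[of "Suc N" "m - 1" x] assms by simp
  next
    case True
    have "hp (Suc N) x + x ^ m \<le> x + exp (hp N x + Gp N x) - 1 - hp N x"
      using core_upper[of "Suc N" x] assms(1,2) True by simp
    moreover have "exp (hp N x + Gp N x) - hp N x \<le> exp (y + Gs x) - y"
      using exp_mono_gap[OF hp_nonneg[OF assms(1)] Suc.IH, of "Gp N x" "Gs x"]
        Gp_le_Gs[OF assms(3,1,2)] assms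
      by (simp add: Gp_def sum_nonneg gterm_nonneg)
    ultimately show ?thesis using assms(5) by linarith
  qed
qed


lemma star_Av:
  assumes "k \<ge> 2" "k \<noteq> m"
  shows "star k \<in> Av k"
proof -
  have lv: "leaves (star k) = k" using assms by (simp add: star_def)
  have sub: "subtrees (star k) = {star k, HNode {#}}" using assms by (auto simp: star_def)
  have "T \<noteq> star k" using lv lT assms by auto
  moreover have "T \<noteq> HNode {#}" using lT m2 by auto
  ultimately have "\<not> contains_sub (star k) T" by (simp add: contains_sub_def sub)
  moreover have "is_hier (star k)" using assms by (simp add: star_def)
  ultimately show ?thesis using lv by (simp add: Av_def)
qed

lemma Hc_ge1: "k \<ge> 2 \<Longrightarrow> k \<noteq> m \<Longrightarrow> Hc k \<ge> 1"
proof -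
  assume k: "k \<ge> 2" "k \<noteq> m"
  have "Av k \<noteq> {}" using star_Av[OF k] by auto
  then have "card (Av k) \<ge> 1" using finite_Av[of k] by (simp add: Suc_le_eq card_gt_0_iff)
  then show ?thesis by (simp add: Hc_card)
qed

lemma Hs_gap:
  assumes "0 \<le> x" "summable (\<lambda>n. Hc n * x ^ n)"
  shows "hp (m - 1) x + x ^ (m + 1) + x ^ (m + 2) \<le> Hs x"
proof -
  have d: "{..m - 1} \<inter> {m + 1, m + 2} = {}" by auto
  have "hp (m - 1) x + x ^ (m + 1) + x ^ (m + 2) \<le> hp (m - 1) x + Hc (m + 1) * x ^ (m + 1) + Hc (m + 2) * x ^ (m + 2)"
  proof -
    have "x ^ (m+1) \<le> Hc (m+1) * x ^ (m+1)"
      using mult_right_mono[OF Hc_ge1[of "m+1"], of "x ^ (m+1)"] m2 assms(1) by simp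
    moreover have "x ^ (m+2) \<le> Hc (m+2) * x ^ (m+2)"
      using mult_right_mono[OF Hc_ge1[of "m+2"], of "x ^ (m+2)"] m2 assms(1) by simp
    ultimately show ?thesis by linarith
  qed
  also have "\<dots> = (\<Sum>n\<in>{..m - 1} \<union> {m + 1, m + 2}. Hc n * x ^ n)"
    using d by (subst sum.union_disjoint) (auto simp: hp_def)
  also have "\<dots> \<le> (\<Sum>n\<le>m + 2. Hc n * x ^ n)"
    using assms(1) by (intro sum_mono2) (auto intro: hterm_nonneg)
  also have "\<dots> \<le> Hs x" using hp_le_Hs[OF assms(2,1), of "m+2"] by (simp add: hp_def)
  finally show ?thesis .
qed

lemma E2:
  assumes "0 < x" "x < 1" "summable (\<lambda>n. Hc n * x ^ n)" "summable (\<lambda>n. Hc n * gg (x ^ n))"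
  shows "exp (Hs x + Gs x) \<le> 2"
proof (rule ccontr)
  define E where "E = exp (Hs x + Gs x)"
  assume "\<not> exp (Hs x + Gs x) \<le> 2"
  then have E2: "E > 2" by (simp add: E_def)
  have eq: "2 * Hs x = x - x ^ m + E - 1" using EQ[of x] assms by (simp add: E_def)
  define \<delta> where "\<delta> = Hs x - hp (m - 1) x"
  have "x ^ (m + 2) \<ge> 0" using assms by simp
  then have "\<delta> \<ge> x ^ (m + 1)" using Hs_gap[of x] assms unfolding \<delta>_def by linarith
  moreover have "x ^ (m + 1) > 0" using assms by simp
  ultimately have \<delta>pos: "\<delta> > 0" by linarith
  define \<eta> where "\<eta> = min (ln (E / 2)) \<delta>"
  have lnpos: "ln (E / 2) > 0" using E2 by simp
  have \<eta>pos: "\<eta> > 0" using lnpos \<delta>pos by (simp add: \<eta>_def)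
  define y where "y = Hs x - \<eta>"
  have y1: "hp (m - 1) x \<le> y" by (simp add: y_def \<eta>_def \<delta>_def)
  define a where "a = exp (- \<eta>)"
  have apos: "a > 0" by (simp add: a_def)
  have expy: "exp (y + Gs x) = E * a"
    by (simp add: y_def a_def E_def exp_add[symmetric] algebra_simps)
  have "\<eta> \<le> ln (E / 2)" by (simp add: \<eta>_def)
  then have "exp \<eta> \<le> exp (ln (E / 2))" by simp
  also have "\<dots> = E / 2" using E2 by simp
  finally have "exp \<eta> \<le> E / 2" .
  then have Ea: "E * a \<ge> 2"
    using E2 by (simp add: a_def exp_minus field_simps)
  have "a * (1 + \<eta>) \<le> a * exp \<eta>" using apos exp_ge_add_one_self[of \<eta>] by (intro mult_left_mono) auto
  also have "a * exp \<eta> = 1" by (simp add: a_def exp_minus)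
  finally have a1: "a * (1 + \<eta>) \<le> 1" .
  have "E * (a * \<eta>) \<le> E * (1 - a)" using a1 E2 by (intro mult_left_mono) (auto simp: algebra_simps)
  moreover have "2 * \<eta> \<le> (E * a) * \<eta>" using Ea \<eta>pos by (intro mult_right_mono) auto
  ultimately have key: "2 * \<eta> \<le> E * (1 - a)" by (simp add: mult.assoc)
  have sup: "x - x ^ m + exp (y + Gs x) - 1 \<le> 2 * y"
    using key eq expy by (simp add: y_def algebra_simps)
  have "\<And>N. hp N x \<le> y"
    using least_super[of x y] assms y1 sup by simp
  then have "Hs x \<le> y" using bounded_summable(2)[of x y] assms by simp
  then show False using \<eta>pos by (simp add: y_def)
qed

lemma Gp_le_hp:
  assumes "0 \<le> x" "x < 1"
  shows "Gp N x \<le> hp N x * (x / (1 - x))"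
  unfolding Gp_def hp_def sum_distrib_right
proof (intro sum_mono)
  fix n assume "n \<in> {..N}"
  show "Hc n * gg (x ^ n) \<le> Hc n * x ^ n * (x / (1 - x))"
  proof (cases "n = 0")
    case True then show ?thesis by (simp add: Hc0)
  next
    case False
    have "gg (x ^ n) \<le> (x^2) ^ n / (1 - x)" using gg_pow_le[OF assms] False by simp
    also have "(x^2) ^ n / (1 - x) = x ^ n * (x ^ n / (1 - x))"
      by (simp add: power_mult[symmetric] power2_eq_square power_mult_distrib)
    also have "\<dots> \<le> x ^ n * (x / (1 - x))"
      using assms False power_decreasing[of 1 n x]
      by (intro mult_left_mono divide_right_mono) auto
    finally have "gg (x ^ n) \<le> x ^ n * (x / (1 - x))" .
    from mult_left_mono[OF this Hc_nonneg[of n]] show ?thesis by (simp add: mult.assoc)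
  qed
qed

lemma pos_summable: "summable (\<lambda>n. Hc n * (1/10) ^ n)"
proof -
  define x :: real where "x = 1/10"
  have "hp N x \<le> 1/5" for N
  proof (induction N)
    case 0 then show ?case by (simp add: hp_def Hc0)
  next
    case (Suc N)
    define a where "a = hp N x"
    have a0: "0 \<le> a" "a \<le> 1/5" using hp_nonneg[of x N] Suc by (auto simp: a_def x_def)
    have g: "0 \<le> Gp N x" "Gp N x \<le> 1/45"
    proof -
      show "0 \<le> Gp N x" unfolding Gp_def by (intro sum_nonneg gterm_nonneg) (auto simp: x_def)
      have "Gp N x \<le> a * (1/9)" using Gp_le_hp[of x N] by (simp add: a_def x_def)
      then show "Gp N x \<le> 1/45" using a0 by linarith
    qed
    have "hp (Suc N) x + (if Suc N \<ge> m then x ^ m else 0) \<le> x + exp (a + Gp N x) - 1 - a"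
      using core_upper[of "Suc N" x] by (simp add: a_def x_def)
    moreover have "0 \<le> (if Suc N \<ge> m then x ^ m else 0)" by (simp add: x_def)
    ultimately have "hp (Suc N) x \<le> x + exp (a + Gp N x) - 1 - a" by linarith
    moreover have "exp (a + Gp N x) - a \<le> exp (1/5 + 1/45) - 1/5"
      using exp_mono_gap[OF a0 g] by simp
    moreover have "exp (1/5 + 1/45 :: real) \<le> 9/7"
    proof -
      have h1: "(7/9::real) \<le> exp (- (2/9))" using exp_ge_add_one_self[of "- (2/9) :: real"] by simp
      have "exp (2/9 :: real) * (7/9) \<le> exp (2/9) * exp (- (2/9))"
        by (rule mult_left_mono[OF h1]) simp
      also have "exp (2/9 :: real) * exp (- (2/9)) = 1" by (simp add: exp_minus)
      finally have "exp (2/9 :: real) * (7/9) \<le> 1" .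
      moreover have "(1/5 + 1/45 :: real) = 2/9" by simp
      ultimately show ?thesis by simp
    qed
    ultimately show ?case by (simp add: x_def)
  qed
  then show ?thesis using bounded_summable(1)[of "1/10" "1/5"] by (simp add: x_def)
qed


lemma Gs_cont:
  assumes "0 \<le> r" "r < 1" "summable (\<lambda>n. Hc n * (r^2) ^ n)"
  shows "continuous_on {0..r} Gs"
proof -
  have ul: "uniform_limit {0..r} (\<lambda>n x. \<Sum>i<n. Hc i * gg (x ^ i)) (\<lambda>x. \<Sum>i. Hc i * gg (x ^ i)) sequentially"
  proof (rule Weierstrass_m_test)
    fix i and x :: real assume x: "x \<in> {0..r}"
    show "norm (Hc i * gg (x ^ i)) \<le> Hc i * (r^2) ^ i / (1 - r)"
    proof (cases "i = 0")
      case True then show ?thesis by (simp add: Hc0)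
    next
      case False
      have x01: "0 \<le> x" "x < 1" using x assms by auto
      have "gg (x ^ i) \<le> (x^2) ^ i / (1 - x)" using gg_pow_le[OF x01] False by simp
      also have "\<dots> \<le> (r^2) ^ i / (1 - r)"
        using x assms by (intro frac_le power_mono) auto
      finally have "Hc i * gg (x ^ i) \<le> Hc i * ((r^2) ^ i / (1 - r))"
        using Hc_nonneg[of i] by (rule mult_left_mono)
      then show ?thesis using gterm_nonneg[OF x01, of i] by simp
    qed
  next
    show "summable (\<lambda>i. Hc i * (r^2) ^ i / (1 - r))" using assms(3) by (rule summable_divide)
  qed
  have "continuous_on {0..r} (\<lambda>x. \<Sum>i. Hc i * gg (x ^ i))"
  proof (rule uniform_limit_theorem[OF _ ul])
    show "\<forall>\<^sub>F n in sequentially. continuous_on {0..r} (\<lambda>x. \<Sum>i<n. Hc i * gg (x ^ i))"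
    proof (intro always_eventually allI continuous_on_sum)
      fix n i
      show "continuous_on {0..r} (\<lambda>x. Hc i * gg (x ^ i))"
      proof (cases "i = 0")
        case True then show ?thesis by (simp add: continuous_on_const)
      next
        case False
        have "\<And>x. x \<in> {0..r} \<Longrightarrow> 1 - x ^ i \<noteq> 0"
        proof -
          fix x assume "x \<in> {0..r}"
          then have "x ^ i < 1" using assms False by (simp add: power_less_one_iff)
          then show "1 - x ^ i \<noteq> 0" by simp
        qed
        then show ?thesis unfolding gg_def by (intro continuous_intros) auto
      qed
    qed
  qed simp
  then show ?thesis unfolding Gs_def .
qed

lemma Hs_le1:
  assumes "0 < x" "x < 1" "ereal x < conv_radius Hc"
  shows "summable (\<lambda>n. Hc n * x ^ n)" "Hs x \<le> 1"
proof -
  show s1: "summable (\<lambda>n. Hc n * x ^ n)" using summable_in_conv_radius[of x Hc] assms by simp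
  have "x ^ 2 \<le> x" using assms by (simp add: power2_eq_square mult_left_le_one_le less_imp_le)
  then have "ereal (norm (x ^ 2)) < conv_radius Hc" using assms
    by (simp add: abs_of_nonneg) (meson ereal_less_eq(3) order_le_less_trans)
  then have s2: "summable (\<lambda>n. Hc n * (x ^ 2) ^ n)" by (rule summable_in_conv_radius)
  have s3: "summable (\<lambda>n. Hc n * gg (x ^ n))" using G_summable[OF _ assms(2) s2] assms by simp
  have "exp (Hs x + Gs x) \<le> 2" using E2[OF assms(1,2) s1 s3] .
  moreover have "exp (Hs x) \<le> exp (Hs x + Gs x)" using Gs_nonneg[OF s3] assms by simp
  moreover have "1 + Hs x \<le> exp (Hs x)" by (rule exp_ge_add_one_self)
  ultimately show "Hs x \<le> 1" by linarith
qed


lemma conv_lt1: "conv_radius Hc < 1"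
proof (rule ccontr)
  assume "\<not> conv_radius Hc < 1"
  then have c1: "conv_radius Hc \<ge> 1" by simp
  define x0 :: real where "x0 = 1 - 1 / (4 * (real m + 2))"
  have x0: "0 < x0" "x0 < 1" by (auto simp: x0_def field_simps)
  have "ereal x0 < conv_radius Hc" using x0 c1 by (meson ereal_less(3) less_ereal.simps(1) order_less_le_trans one_ereal_def)
  then have sm: "summable (\<lambda>n. Hc n * x0 ^ n)" and le1: "Hs x0 \<le> 1" using Hs_le1 x0 by auto
  have gap: "hp (m - 1) x0 + x0 ^ (m + 1) + x0 ^ (m + 2) \<le> Hs x0" using Hs_gap[OF _ sm] x0 by simp
  have bern: "1 + real (m + 2) * (- 1 / (4 * (real m + 2))) \<le> (1 + (- 1 / (4 * (real m + 2)))) ^ (m + 2)"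
    by (rule Bernoulli_inequality) (auto simp: field_simps)
  have e1: "1 + real (m + 2) * (- 1 / (4 * (real m + 2))) = 3/4" by (simp add: field_simps)
  have e2: "1 + (- 1 / (4 * (real m + 2))) = x0" by (simp add: x0_def)
  have b: "x0 ^ (m + 2) \<ge> 3/4" using bern unfolding e1 e2 .
  have "x0 ^ (m + 2) \<le> x0 ^ (m + 1)" using x0 by (intro power_decreasing) auto
  moreover have "0 \<le> hp (m - 1) x0" using x0 by (intro hp_nonneg) simp
  ultimately show False using gap le1 b by linarith
qed

theorem main_loc:
  "(\<lambda>n. Hc n * real_of_ereal (conv_radius Hc) ^ n) sums
     ((1 + real_of_ereal (conv_radius Hc) - real_of_ereal (conv_radius Hc) ^ m) / 2)"
proof -
  define \<rho> where "\<rho> = real_of_ereal (conv_radius Hc)"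
  have c10: "conv_radius Hc \<ge> ereal (1/10)" using conv_radius_geI[OF pos_summable] by simp
  obtain r' where r': "conv_radius Hc = ereal r'"
    using conv_lt1 c10 by (cases "conv_radius Hc") auto
  have crho: "conv_radius Hc = ereal \<rho>" using r' by (simp add: \<rho>_def)
  have rho: "1/10 \<le> \<rho>" "\<rho> < 1" using c10 conv_lt1 crho by auto
  have hprho: "hp N \<rho> \<le> 1" for N
  proof -
    define xs where "xs = (\<lambda>n::nat. \<rho> - \<rho> / real n)"
    have "xs \<longlonglongrightarrow> \<rho> - 0" unfolding xs_def by (intro tendsto_intros lim_const_over_n)
    then have lim: "(\<lambda>n. hp N (xs n)) \<longlonglongrightarrow> hp N \<rho>" unfolding hp_def by (auto intro!: tendsto_intros)
    show ?thesis
    proof (rule LIMSEQ_le_const2[OF lim], intro exI allI impI)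
      fix n :: nat assume n: "n \<ge> 2"
      have "\<rho> / real n > 0" using n rho by simp
      moreover have "\<rho> / real n < \<rho>" using n rho by (simp add: field_simps)
      ultimately have x: "0 < xs n" "xs n < \<rho>" by (auto simp: xs_def)
      then have "ereal (xs n) < conv_radius Hc" "xs n < 1" using crho rho by auto
      then have "summable (\<lambda>k. Hc k * xs n ^ k)" "Hs (xs n) \<le> 1" using Hs_le1 x by auto
      then show "hp N (xs n) \<le> 1" using hp_le_Hs[of "xs n" N] x by simp
    qed
  qed
  have srho: "summable (\<lambda>n. Hc n * \<rho> ^ n)" using bounded_summable(1)[OF hprho] rho by simp
  have "\<rho> ^ 2 < \<rho>" using rho by (simp add: power2_eq_square)
  then have "ereal (norm (\<rho> ^ 2)) < conv_radius Hc" using crho rho by simp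
  then have srho2: "summable (\<lambda>n. Hc n * (\<rho> ^ 2) ^ n)" by (rule summable_in_conv_radius)
  have sg: "summable (\<lambda>n. Hc n * gg (\<rho> ^ n))" using G_summable[OF _ _ srho2] rho by simp
  define E where "E = exp (Hs \<rho> + Gs \<rho>)"
  have eq: "2 * Hs \<rho> = \<rho> - \<rho> ^ m + E - 1" using EQ[OF _ _ srho sg] rho by (simp add: E_def)
  have Ele: "E \<le> 2" using E2[OF _ _ srho sg] rho by (simp add: E_def)
  have Ege: "E \<ge> 2"
  proof (rule ccontr)
    assume "\<not> E \<ge> 2"
    then have Elt: "E < 2" by simp
    have Epos: "E > 0" by (simp add: E_def)
    define \<eta> where "\<eta> = ln (2 / E) / 2"
    have \<eta>pos: "\<eta> > 0" using Elt Epos by (simp add: \<eta>_def)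
    define b where "b = exp \<eta>"
    have "b * b = exp (ln (2 / E))" by (simp add: b_def \<eta>_def exp_add[symmetric])
    also have "\<dots> = 2 / E" using Epos by simp
    finally have bb: "E * b * b = 2" using Epos by (simp add: field_simps)
    have b1: "b > 1" using \<eta>pos by (simp add: b_def)
    have Eb: "E * b < 2"
    proof -
      have "E * b * 1 < E * b * b" using b1 Epos by (intro mult_strict_left_mono) auto
      then show ?thesis using bb by simp
    qed
    have "b * (1 - \<eta>) \<le> b * exp (- \<eta>)"
      using exp_ge_add_one_self[of "- \<eta>"] b1 by (intro mult_left_mono) auto
    also have "b * exp (- \<eta>) = 1" by (simp add: b_def exp_minus)
    finally have bm1: "b - 1 \<le> b * \<eta>" by (simp add: algebra_simps)
    define y where "y = Hs \<rho> + \<eta>"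
    define \<Phi> where "\<Phi> = (\<lambda>x. 2 * y - (x - x ^ m + exp (y + Gs x) - 1))"
    define \<Psi> where "\<Psi> = (\<lambda>x. y - hp (m - 1) x)"
    have expy: "exp (y + Gs \<rho>) = E * b" by (simp add: y_def E_def b_def exp_add[symmetric] algebra_simps)
    have "E * (b - 1) \<le> E * (b * \<eta>)" using bm1 Epos by (intro mult_left_mono) auto
    moreover have "(E * b) * \<eta> < 2 * \<eta>" using Eb \<eta>pos by (intro mult_strict_right_mono) auto
    ultimately have "E * (b - 1) < 2 * \<eta>" by (simp add: mult.assoc)
    then have Phi0: "\<Phi> \<rho> > 0" using eq expy by (simp add: \<Phi>_def y_def algebra_simps)
    have "hp (m - 1) \<rho> \<le> Hs \<rho>" using hp_le_Hs[OF srho] rho by simp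
    then have Psi0: "\<Psi> \<rho> > 0" using \<eta>pos by (simp add: \<Psi>_def y_def)
    define r where "r = (\<rho> + sqrt \<rho>) / 2"
    have sq: "sqrt \<rho> * sqrt \<rho> = \<rho>" using rho by simp
    have sq1: "sqrt \<rho> < 1" using rho by simp
    have sqpos: "sqrt \<rho> > 0" using rho by simp
    have "\<rho> < sqrt \<rho>"
    proof -
      have "sqrt \<rho> * sqrt \<rho> < sqrt \<rho> * 1" using sq1 sqpos by (intro mult_strict_left_mono) auto
      then show ?thesis using sq by simp
    qed
    moreover have "\<rho> + sqrt \<rho> < 2" using sq1 rho by linarith
    ultimately have r: "\<rho> < r" "r < sqrt \<rho>" "r < 1" "0 \<le> r" using rho sqpos unfolding r_def
      by (auto simp: field_simps)
    have "r ^ 2 < sqrt \<rho> ^ 2" using r by (intro power_strict_mono) auto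
    then have r2: "r ^ 2 < \<rho>" using sq by (simp add: power2_eq_square)
    have "ereal (norm (r ^ 2)) < conv_radius Hc" using r2 crho by simp
    then have sr2: "summable (\<lambda>n. Hc n * (r ^ 2) ^ n)" by (rule summable_in_conv_radius)
    have cont: "continuous_on {0..r} Gs" using Gs_cont[OF r(4,3) sr2] .
    define xs where "xs = (\<lambda>n::nat. \<rho> + (r - \<rho>) / real n)"
    have xsS: "\<forall>n. xs n \<in> {0..r}"
    proof
      fix n :: nat
      show "xs n \<in> {0..r}"
      proof (cases "n = 0")
        case True then show ?thesis using r rho by (simp add: xs_def)
      next
        case False
        then have "real n \<ge> 1" by simp
        then have "(r - \<rho>) / real n \<le> (r - \<rho>) / 1" using r by (intro divide_left_mono) auto
        then have "(r - \<rho>) / real n \<le> r - \<rho>" by simp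
        moreover have "(r - \<rho>) / real n \<ge> 0" using r by simp
        ultimately show ?thesis using rho by (simp add: xs_def)
      qed
    qed
    have xlim: "xs \<longlonglongrightarrow> \<rho> + 0" unfolding xs_def by (intro tendsto_intros lim_const_over_n)
    have "(Gs \<circ> xs) \<longlonglongrightarrow> Gs \<rho>"
      using cont xsS xlim rho r unfolding continuous_on_sequentially by auto
    then have glim: "(\<lambda>n. Gs (xs n)) \<longlonglongrightarrow> Gs \<rho>" by (simp add: o_def)
    have "(\<lambda>n. \<Phi> (xs n)) \<longlonglongrightarrow> \<Phi> \<rho>" unfolding \<Phi>_def using xlim glim by (auto intro!: tendsto_intros)
    then have ev1: "eventually (\<lambda>n. \<Phi> (xs n) > 0) sequentially" using Phi0 by (rule order_tendstoD(1))
    have "(\<lambda>n. \<Psi> (xs n)) \<longlonglongrightarrow> \<Psi> \<rho>" unfolding \<Psi>_def hp_def using xlim by (auto intro!: tendsto_intros)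
    then have ev2: "eventually (\<lambda>n. \<Psi> (xs n) > 0) sequentially" using Psi0 by (rule order_tendstoD(1))
    have ev3: "eventually (\<lambda>n. n \<ge> (1::nat)) sequentially" by (rule eventually_ge_at_top)
    obtain n where n: "\<Phi> (xs n) > 0" "\<Psi> (xs n) > 0" "n \<ge> 1"
    proof -
      from eventually_conj[OF ev1 eventually_conj[OF ev2 ev3]]
      obtain N where "\<forall>n\<ge>N. \<Phi> (xs n) > 0 \<and> \<Psi> (xs n) > 0 \<and> n \<ge> 1"
        unfolding eventually_sequentially by blast
      then show ?thesis using that by blast
    qed
    define x where "x = xs n"
    have "(r - \<rho>) / real n > 0" using n r by simp
    then have xgt: "x > \<rho>" by (simp add: x_def xs_def)
    have xle: "x \<le> r" using xsS by (simp add: x_def)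
    have x1: "0 \<le> x" "x < 1" using xgt xle r rho by auto
    have "x ^ 2 \<le> r ^ 2" using x1 xle by (intro power_mono) auto
    then have "ereal (norm (x ^ 2)) < conv_radius Hc" using r2 crho by simp
    then have sx2: "summable (\<lambda>k. Hc k * (x ^ 2) ^ k)" by (rule summable_in_conv_radius)
    have sgx: "summable (\<lambda>k. Hc k * gg (x ^ k))" using G_summable[OF x1 sx2] .
    have "\<And>N. hp N x \<le> y"
      using least_super[OF x1 sgx, of y] n by (simp add: x_def \<Phi>_def \<Psi>_def)
    then have "summable (\<lambda>k. Hc k * x ^ k)" using bounded_summable(1) x1 by blast
    then have "conv_radius Hc \<ge> ereal (norm x)" by (rule conv_radius_geI)
    then show False using crho xgt x1 by simp
  qed
  have "E = 2" using Ele Ege by simp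
  then have hs: "Hs \<rho> = (1 + \<rho> - \<rho> ^ m) / 2" using eq by simp
  have "(\<lambda>n. Hc n * \<rho> ^ n) sums Hs \<rho>" unfolding Hs_def by (rule summable_sums[OF srho])
  then have "(\<lambda>n. Hc n * \<rho> ^ n) sums ((1 + \<rho> - \<rho> ^ m) / 2)" by (simp only: hs)
  then show ?thesis by (simp only: \<rho>_def)
qed

end


theorem lemma3p5:
  fixes T :: htree and m :: nat
  assumes "m \<ge> 2" and "is_hier T" and "leaves T = m"
  defines "H \<equiv> (\<lambda>n. if n = 0 then 0 else real (avoid_count T n))"
  defines "\<rho> \<equiv> real_of_ereal (conv_radius H)"
  shows "(\<lambda>n. H n * \<rho> ^ n) sums ((1 + \<rho> - \<rho> ^ m) / 2)"
proof -
  interpret avd T m using assms(1-3) by unfold_locales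
  have HH: "H = Hc" unfolding H_def by (simp add: Hc_def fun_eq_iff)
  show ?thesis unfolding \<rho>_def HH by (rule main_loc)
qed

end
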